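(* For all $a,b>0$, $A(a,b)\le\lambda_s(a,b)\le S(a,b)$ whenever $2\le s\le 5$. These bounds are best possible: the inequality $A(a,b)\le\lambda_s(a,b)$ holds for all $a,b>0$ if and only if $s\ge 2$, and the inequality $\lambda_s(a,b)\le S(a,b)$ holds for all $a,b>0$ if and only if $s\le 5$.
   Context: For $a,b>0$ with $a\neq b$ define $$\lambda_s(a,b)=\begin{cases}\dfrac{s-1}{s+1}\cdot\dfrac{a^{s+1}+b^{s+1}-2\left(\frac{a+b}{2}\right)^{s+1}}{a^s+b^s-2\left(\frac{a+b}{2}\right)^s}, & s\in\mathbb{R}\setminus\{-1,0,1\},\\[3mm] \dfrac{2\log\frac{a+b}{2}-\log a-\log b}{\frac{1}{2a}+\frac{1}{2b}-\frac{2}{a+b}}, & s=-1,\\[3mm] \dfrac{a\log a+b\log b-(a+b)\log\frac{a+b}{2}}{2\log\frac{a+b}{2}-\log a-\log b}, & s=0,\\[3mm] \dfrac{(b-a)^2}{4\left(a\log a+b\log b-(a+b)\log\frac{a+b}{2}\right)}, & s=1,\end{cases}$$ and $\lambda_s(a,a)=a$. The arithmetic mean is $A(a,b)=(a+b)/2$ and the Gini mean is $S(a,b)=a^{a/(a+b)}\,b^{b/(a+b)}$. *)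

theory Defs
  imports "HOL-Analysis.Analysis"
begin

definition lam :: "real \<Rightarrow> real \<Rightarrow> real \<Rightarrow> real" where
  "lam s a b =
    (if a = b then a
     else if s = -1 then
       (2 * ln ((a+b)/2) - ln a - ln b) / (1/(2*a) + 1/(2*b) - 2/(a+b))
     else if s = 0 then
       (a * ln a + b * ln b - (a+b) * ln ((a+b)/2)) / (2 * ln ((a+b)/2) - ln a - ln b)
     else if s = 1 then
       (b - a)^2 / (4 * (a * ln a + b * ln b - (a+b) * ln ((a+b)/2)))
     else
       (s - 1) / (s + 1) *
       ((a powr (s+1) + b powr (s+1) - 2 * ((a+b)/2) powr (s+1)) /
        (a powr s + b powr s - 2 * ((a+b)/2) powr s)))"

definition AM :: "real \<Rightarrow> real \<Rightarrow> real" where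
  "AM a b = (a + b) / 2"

definition Gini :: "real \<Rightarrow> real \<Rightarrow> real" where
  "Gini a b = a powr (a/(a+b)) * b powr (b/(a+b))"

end

theory Submission
  imports Defs "HOL-Real_Asymp.Real_Asymp"
begin


lemma mono_deriv:
  fixes f g :: "real \<Rightarrow> real"
  assumes "a \<le> b" "\<And>x. a \<le> x \<Longrightarrow> x \<le> b \<Longrightarrow> (f has_real_derivative g x) (at x)"
    "\<And>x. a \<le> x \<Longrightarrow> x \<le> b \<Longrightarrow> g x \<ge> 0"
  shows "f a \<le> f b"
proof (cases "a = b")
  case False
  then have "a < b" using assms(1) by simp
  from MVT2[OF this assms(2)] obtain z where z: "a < z" "z < b" "f b - f a = (b - a) * g z" by blast
  have "g z \<ge> 0" using z assms(3) by auto
  then have "(b - a) * g z \<ge> 0" using \<open>a<b\<close> by simp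
  then show ?thesis using z by linarith
qed simp

lemma strict_mid:
  fixes f f' f'' :: "real \<Rightarrow> real"
  assumes D1: "\<And>t. t > 0 \<Longrightarrow> (f has_real_derivative f' t) (at t)"
    and D2: "\<And>t. t > 0 \<Longrightarrow> (f' has_real_derivative f'' t) (at t)"
    and nn: "\<And>t. t > 0 \<Longrightarrow> f'' t \<ge> 0"
    and ps: "\<And>t. t > 0 \<Longrightarrow> t \<noteq> c \<Longrightarrow> f'' t > 0"
    and ab: "0 < a" "a < b"
  shows "f a + f b - 2 * f ((a+b)/2) > 0"
proof -
  have mono: "f' x \<le> f' y" if "0 < x" "x \<le> y" for x y
    by (rule mono_deriv[of x y f' f'']) (use that D2 nn in auto)
  have smono: "f' x < f' y" if "0 < x" "x < y" for x y
  proof -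
    define w where "w = (x+y)/2"
    have w: "x < w" "w < y" using that by (auto simp: w_def)
    show ?thesis
    proof (cases "x < c \<and> c < w")
      case True
      have dd: "\<And>t. w \<le> t \<Longrightarrow> t \<le> y \<Longrightarrow> (f' has_real_derivative f'' t) (at t)"
        using D2 w that by simp
      from MVT2[OF w(2) dd] obtain z where z: "w < z" "z < y" "f' y - f' w = (y - w) * f'' z"
        by blast
      have "f'' z > 0" using ps[of z] z True w that by auto
      hence "(y - w) * f'' z > 0" using w by simp
      hence "f' w < f' y" using z by linarith
      moreover have "f' x \<le> f' w" using mono w that by auto
      ultimately show ?thesis by simp
    next
      case False
      have dd: "\<And>t. x \<le> t \<Longrightarrow> t \<le> w \<Longrightarrow> (f' has_real_derivative f'' t) (at t)"
        using D2 w that by simp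
      from MVT2[OF w(1) dd] obtain z where z: "x < z" "z < w" "f' w - f' x = (w - x) * f'' z"
        by blast
      have "f'' z > 0" using ps[of z] z False w that by auto
      hence "(w - x) * f'' z > 0" using w by simp
      hence "f' x < f' w" using z by linarith
      moreover have "f' w \<le> f' y" using mono w that by auto
      ultimately show ?thesis by simp
    qed
  qed
  define m where "m = (a+b)/2"
  have m: "a < m" "m < b" using ab by (auto simp: m_def)
  have d1: "\<And>t. a \<le> t \<Longrightarrow> t \<le> m \<Longrightarrow> (f has_real_derivative f' t) (at t)"
    using D1 ab by simp
  have d2: "\<And>t. m \<le> t \<Longrightarrow> t \<le> b \<Longrightarrow> (f has_real_derivative f' t) (at t)"
    using D1 ab m by simp
  from MVT2[OF m(1) d1] obtain z1 where z1: "a < z1" "z1 < m" "f m - f a = (m - a) * f' z1"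
    by blast
  from MVT2[OF m(2) d2] obtain z2 where z2: "m < z2" "z2 < b" "f b - f m = (b - m) * f' z2"
    by blast
  have "f' z1 < f' z2" using smono[of z1 z2] z1 z2 ab by auto
  moreover have "b - m = m - a" by (simp add: m_def field_simps)
  ultimately have "(b - m) * f' z2 > (m - a) * f' z1" using m by (simp add: mult_strict_left_mono)
  hence "f b - f m > f m - f a" using z1 z2 by linarith
  then show ?thesis by (simp add: m_def)
qed

definition P :: "real \<Rightarrow> real \<Rightarrow> real" where
  "P p t = (if p = 0 then - ln t else if p = 1 then t * ln t else t powr p / (p * (p - 1)))"
definition P' :: "real \<Rightarrow> real \<Rightarrow> real" where
  "P' p t = (if p = 0 then - 1 / t else if p = 1 then ln t + 1 else t powr (p - 1) / (p - 1))"

lemma DP: "t > 0 \<Longrightarrow> (P p has_real_derivative P' p t) (at t)"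
proof -
  assume t: "t > 0"
  consider "p = 0" | "p = 1" | "p \<noteq> 0 \<and> p \<noteq> 1" by blast
  then show ?thesis
  proof cases
    case 1
    have "((\<lambda>t. - ln t) has_real_derivative - 1 / t) (at t)"
      using t by (auto intro!: derivative_eq_intros)
    then show ?thesis using 1 unfolding P_def P'_def by simp
  next
    case 2
    have "((\<lambda>t. t * ln t) has_real_derivative ln t + 1) (at t)"
      using t by (auto intro!: derivative_eq_intros)
    then show ?thesis using 2 unfolding P_def P'_def by simp
  next
    case 3
    have "((\<lambda>t. t powr p / (p * (p - 1))) has_real_derivative p * t powr (p - 1) / (p * (p - 1))) (at t)"
      using t by (intro DERIV_cdivide has_real_derivative_powr)
    moreover have "p * t powr (p - 1) / (p * (p - 1)) = t powr (p - 1) / (p - 1)" using 3 by simp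
    ultimately have "((\<lambda>t. t powr p / (p * (p - 1))) has_real_derivative t powr (p - 1) / (p - 1)) (at t)" by simp
    then show ?thesis using 3 unfolding P_def P'_def by simp
  qed
qed

lemma DP': "t > 0 \<Longrightarrow> (P' p has_real_derivative t powr (p - 2)) (at t)"
proof -
  assume t: "t > 0"
  consider "p = 0" | "p = 1" | "p \<noteq> 0 \<and> p \<noteq> 1" by blast
  then show ?thesis
  proof cases
    case 1
    have "((\<lambda>t. - 1 / t) has_real_derivative t powr (0 - 2)) (at t)"
      using t by (auto intro!: derivative_eq_intros simp: powr_minus power2_eq_square field_simps)
    then show ?thesis using 1 unfolding P'_def by simp
  next
    case 2
    have "((\<lambda>t. ln t + 1) has_real_derivative t powr (1 - 2)) (at t)"
      using t by (auto intro!: derivative_eq_intros simp: powr_minus field_simps)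
    then show ?thesis using 2 unfolding P'_def by simp
  next
    case 3
    have "((\<lambda>t. t powr (p - 1) / (p - 1)) has_real_derivative (p - 1) * t powr (p - 1 - 1) / (p - 1)) (at t)"
      using t by (intro DERIV_cdivide has_real_derivative_powr)
    moreover have "(p - 1) * t powr (p - 1 - 1) / (p - 1) = t powr (p - 2)" using 3 by simp
    ultimately have "((\<lambda>t. t powr (p - 1) / (p - 1)) has_real_derivative t powr (p - 2)) (at t)" by simp
    then show ?thesis using 3 unfolding P'_def by simp
  qed
qed

definition Dl :: "real \<Rightarrow> real \<Rightarrow> real \<Rightarrow> real" where
  "Dl p a b = P p a + P p b - 2 * P p ((a+b)/2)"

lemma Dl_pos_aux: "0 < a \<Longrightarrow> a < b \<Longrightarrow> Dl p a b > 0"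
  unfolding Dl_def
  by (rule strict_mid[where f' = "P' p" and f'' = "\<lambda>t. t powr (p - 2)" and c = 0])
     (auto intro: DP DP')

lemma Dl_pos: "0 < a \<Longrightarrow> 0 < b \<Longrightarrow> a \<noteq> b \<Longrightarrow> Dl p a b > 0"
proof -
  assume "0 < a" "0 < b" "a \<noteq> b"
  moreover have "Dl p a b = Dl p b a" unfolding Dl_def by (simp add: add.commute)
  ultimately show ?thesis using Dl_pos_aux[of a b p] Dl_pos_aux[of b a p] by (cases "a < b") auto
qed

lemma lam_eq:
  assumes a: "0 < a" and b: "0 < b" and ab: "a \<noteq> b"
  shows "lam s a b = Dl (s+1) a b / Dl s a b"
proof -
  have m: "(a+b)/2 > 0" using a b by simp
  consider "s = -1" | "s = 0" | "s = 1" | "s \<noteq> -1 \<and> s \<noteq> 0 \<and> s \<noteq> 1" by blast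
  then show ?thesis
  proof cases
    case 1
    have "Dl (s+1) a b = 2 * ln ((a+b)/2) - ln a - ln b" using 1 unfolding Dl_def P_def by simp
    moreover have "Dl s a b = 1/(2*a) + 1/(2*b) - 2/(a+b)" using 1 a b m unfolding Dl_def P_def
      by (simp add: powr_minus divide_simps; simp add: algebra_simps)
    ultimately show ?thesis using 1 ab unfolding lam_def by simp
  next
    case 2
    have "Dl (s+1) a b = a * ln a + b * ln b - (a+b) * ln ((a+b)/2)" using 2 unfolding Dl_def P_def by simp
    moreover have "Dl s a b = 2 * ln ((a+b)/2) - ln a - ln b" using 2 unfolding Dl_def P_def by simp
    ultimately show ?thesis using 2 ab unfolding lam_def by simp
  next
    case 3
    have e1: "Dl (s+1) a b = (b - a)^2 / 4" using 3 a b unfolding Dl_def P_def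
      by (simp add: power2_eq_square field_simps)
    have e2: "Dl s a b = a * ln a + b * ln b - (a+b) * ln ((a+b)/2)" using 3 unfolding Dl_def P_def by simp
    show ?thesis using ab unfolding lam_def e1 e2 using 3 by simp
  next
    case 4
    define N where "N = a powr (s+1) + b powr (s+1) - 2 * ((a+b)/2) powr (s+1)"
    define D where "D = a powr s + b powr s - 2 * ((a+b)/2) powr s"
    have e1: "Dl (s+1) a b = N / ((s + 1) * s)"
      using 4 unfolding Dl_def P_def N_def by (simp add: add_divide_distrib diff_divide_distrib)
    have e2: "Dl s a b = D / (s * (s - 1))"
      using 4 unfolding Dl_def P_def D_def by (simp add: add_divide_distrib diff_divide_distrib)
    have "D \<noteq> 0" using Dl_pos[OF a b ab, of s] e2 by auto
    moreover have "s + 1 \<noteq> 0" "s - 1 \<noteq> 0" "s \<noteq> 0" using 4 by auto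
    ultimately have "(s - 1) / (s + 1) * (N / D) = (N / ((s + 1) * s)) / (D / (s * (s - 1)))"
      by (simp add: divide_simps)
    then show ?thesis using 4 ab unfolding lam_def e1 e2 N_def D_def by simp
  qed
qed

lemma lam_pos: "0 < a \<Longrightarrow> 0 < b \<Longrightarrow> lam s a b > 0"
proof (cases "a = b")
  case False
  assume "0 < a" "0 < b"
  then show ?thesis using False by (simp add: lam_eq Dl_pos)
qed (simp add: lam_def)

lemma lam_mono:
  assumes a: "0 < a" and b: "0 < b" and ab: "a \<noteq> b" and sr: "s < r"
  shows "lam s a b < lam r a b"
proof -
  define c where "c = lam s a b"
  have c: "c > 0" using lam_pos[OF a b] by (simp add: c_def)
  define k where "k = c powr (r - s)"
  define F where "F t = P (r+1) t - c * P r t - k * P (s+1) t + k * c * P s t" for t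
  define F' where "F' t = P' (r+1) t - c * P' r t - k * P' (s+1) t + k * c * P' s t" for t
  define F'' where "F'' t = t powr (r+1-2) - c * t powr (r-2) - k * t powr (s+1-2) + k * c * t powr (s-2)" for t
  have dF: "(F has_real_derivative F' t) (at t)" if "t > 0" for t
    unfolding F_def[abs_def] F'_def
    by (intro DERIV_add DERIV_diff DERIV_cmult DP that)
  have dF': "(F' has_real_derivative F'' t) (at t)" if "t > 0" for t
    unfolding F'_def[abs_def] F''_def
    by (intro DERIV_add DERIV_diff DERIV_cmult DP' that)
  have F''eq: "F'' t = t powr (s - 2) * ((t - c) * (t powr (r - s) - k))" if t: "t > 0" for t
  proof -
    have 1: "t powr (r+1-2) = t powr (s-2) * t * t powr (r-s)"
      using t by (simp add: powr_add[symmetric] powr_mult_base algebra_simps)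
    have 2: "t powr (r-2) = t powr (s-2) * t powr (r-s)"
      using t by (simp add: powr_add[symmetric])
    have 3: "t powr (s+1-2) = t powr (s-2) * t"
      using t by (simp add: powr_add[symmetric] powr_mult_base algebra_simps)
    show ?thesis unfolding F''_def 1 2 3 by (simp add: algebra_simps)
  qed
  have sg: "(t - c) * (t powr (r - s) - k) > 0" if "t > 0" "t \<noteq> c" for t
  proof (cases "t < c")
    case True
    then have "t powr (r - s) < k" unfolding k_def using sr that by (intro powr_less_mono2) auto
    then show ?thesis using True by (simp add: mult_neg_neg)
  next
    case False
    then have "c < t" using that by simp
    then have "k < t powr (r - s)" unfolding k_def using sr c by (intro powr_less_mono2) auto
    then show ?thesis using \<open>c < t\<close> by simp
  qed
  have pos: "F'' t > 0" if "t > 0" "t \<noteq> c" for t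
    using F''eq[OF that(1)] sg[OF that] that(1) by simp
  have nn: "F'' t \<ge> 0" if "t > 0" for t
  proof (cases "t = c")
    case True then show ?thesis using F''eq[OF that] by simp
  qed (use pos that in fastforce)
  have gen: "0 < F u + F v - 2 * F ((u+v)/2)" if "0 < u" "u < v" for u v
    by (rule strict_mid[OF dF dF' nn pos that])
  have sym: "F a + F b - 2 * F ((a+b)/2) = F b + F a - 2 * F ((b+a)/2)" by (simp add: add.commute)
  have key: "F a + F b - 2 * F ((a+b)/2) > 0"
    using gen[of a b] gen[of b a] a b ab sym by (cases "a < b") auto
  have expand: "F a + F b - 2 * F ((a+b)/2) = Dl (r+1) a b - c * Dl r a b - k * Dl (s+1) a b + k * c * Dl s a b"
    unfolding F_def Dl_def by (simp add: algebra_simps)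
  have Ds: "Dl s a b > 0" "Dl r a b > 0" using Dl_pos[OF a b ab] by auto
  have cs: "Dl (s+1) a b = c * Dl s a b" using Ds unfolding c_def lam_eq[OF a b ab] by simp
  have "Dl (r+1) a b - c * Dl r a b > 0" using key expand cs by (simp add: algebra_simps)
  then have "c < Dl (r+1) a b / Dl r a b" using Ds by (simp add: field_simps)
  then show ?thesis unfolding c_def lam_eq[OF a b ab] .
qed



lemma mono_deriv2:
  fixes f g :: "real \<Rightarrow> real"
  assumes "a \<le> b" "\<And>x. a \<le> x \<Longrightarrow> x \<le> b \<Longrightarrow> (f has_real_derivative g x) (at x)"
    "\<And>x. a \<le> x \<Longrightarrow> x \<le> b \<Longrightarrow> g x \<ge> 0"
  shows "f a \<le> f b"
  using mono_deriv assms by blast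

definition D1 :: "real \<Rightarrow> real" where
  "D1 x = (ln (1+x) - ln (1-x))/2 - ((60*x+8*x^3)/(30+30*x^2+2*x^4) - 2*x/(2+x^2))"
definition D1' :: "real \<Rightarrow> real" where
  "D1' x = 1/(1-x^2) - ((1800-1080*x^2-120*x^4-16*x^6)/(30+30*x^2+2*x^4)^2 - (4-2*x^2)/(2+x^2)^2)"

lemma d1: assumes "-1 < x" "x < (1::real)" shows "((\<lambda>x. (60*x+8*x^3)/(30+30*x^2+2*x^4)) has_real_derivative (1800-1080*x^2-120*x^4-16*x^6)/(30+30*x^2+2*x^4)^2) (at x)"
proof -
  have "x^2 \<ge> 0" "x^4 \<ge> 0" by simp_all
  then have pos: "30+30*x^2+2*x^4 \<noteq> 0" by linarith
  have num: "(60 + 24 * x\<^sup>2) * (30 + 30 * x\<^sup>2 + 2 * x ^ 4) - (60 * x + 8 * x ^ 3) * (60 * x + 8 * x ^ 3) = 1800-1080*x^2-120*x^4-16*x^6"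
    by algebra
  show ?thesis
    apply (auto intro!: derivative_eq_intros simp: pos)
    apply (simp only: num)
    apply (simp add: power2_eq_square)
    done
qed
lemma d2: assumes "-1 < x" "x < (1::real)" shows "((\<lambda>x. 2*x/(2+x^2)) has_real_derivative (4-2*x^2)/(2+x^2)^2) (at x)"
proof -
  have "x^2 \<ge> 0" by simp_all
  then have pos: "2+x^2 \<noteq> 0" by linarith
  have num: "4 + 2 * x\<^sup>2 - 4 * (x * x) = 4 - 2*x^2" by algebra
  show ?thesis
    apply (auto intro!: derivative_eq_intros simp: pos)
    apply (simp only: num)
    apply (simp add: power2_eq_square)
    done
qed
lemma d3: assumes "-1 < x" "x < (1::real)" shows "((\<lambda>x. (ln (1+x) - ln (1-x))/2) has_real_derivative 1/(1-x^2)) (at x)"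
proof -
  have "1 - x^2 = (1+x)*(1-x)" by algebra
  moreover have "1+x \<noteq> 0" "1-x \<noteq> 0" using assms by auto
  ultimately show ?thesis using assms
    apply (auto intro!: derivative_eq_intros)
    apply (simp add: field_simps)
    done
qed

lemma dD1: "-1 < x \<Longrightarrow> x < 1 \<Longrightarrow> (D1 has_real_derivative D1' x) (at x)"
  unfolding D1_def[abs_def] D1'_def
  by (intro DERIV_diff d1 d2 d3)

lemma D1'_nn:
  assumes "0 \<le> x" "x < 1"
  shows "D1' x \<ge> 0"
proof -
  define y where "y = x^2"
  have y: "0 \<le> y" "y < 1" using assms by (auto simp: y_def power_less_one_iff abs_square_less_1)
  have x46: "x^4 = y^2" "x^6 = y^3" by (simp_all add: y_def power_mult[symmetric])
  define N where "N = 30+30*y+2*y^2"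
  define C where "C = 2+y"
  define A where "A = 1800-1080*y-120*y^2-16*y^3"
  define B where "B = 4-2*y"
  have y2: "y^2 \<ge> 0" by simp
  have N: "N > 0" and C: "C > 0" using y y2 unfolding N_def C_def by linarith+
  have eq: "D1' x = 1/(1-y) - (A/N^2 - B/C^2)"
    unfolding D1'_def y_def[symmetric] x46 A_def N_def B_def C_def ..
  have poly: "N^2*C^2 - (A*C^2 - B*N^2)*(1-y) = y*(16920+13140*y+2944*y^2+1412*y^3+y^4*(184-4*y))"
    unfolding N_def C_def A_def B_def by (simp add: algebra_simps power2_eq_square power3_eq_cube power4_eq_xxxx)
  have "y*(16920+13140*y+2944*y^2+1412*y^3+y^4*(184-4*y)) \<ge> 0" using y by simp
  hence ineq: "(A*C^2 - B*N^2)*(1-y) \<le> N^2*C^2" using poly by linarith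
  have "A/N^2 - B/C^2 = (A*C^2 - B*N^2)/(N^2*C^2)" using N C by (simp add: field_simps)
  also have "\<dots> \<le> 1/(1-y)" using ineq N C y by (simp add: divide_simps)
  finally show ?thesis using eq by simp
qed


lemma D1_nn: assumes "0 \<le> x" "x < 1" shows "D1 x \<ge> 0"
proof -
  have "D1 0 \<le> D1 x"
    by (rule mono_deriv[of 0 x D1 D1']) (use assms dD1 D1'_nn in auto)
  then show ?thesis by (simp add: D1_def)
qed

definition Dphi :: "real \<Rightarrow> real" where
  "Dphi x = ((1-x)*ln(1-x) + (1+x)*ln(1+x))/2 - (ln (30+30*x^2+2*x^4) - ln (30+15*x^2))"

lemma dDphi: assumes "-1 < x" "x < 1" shows "(Dphi has_real_derivative D1 x) (at x)"
proof -
  have "x^2 \<ge> 0" "x^4 \<ge> 0" by simp_all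
  then have pos: "30+30*x^2+2*x^4 > 0" "30+15*x^2 > 0" "2 + x^2 > 0" by linarith+
  have l1: "((\<lambda>x. ((1-x)*ln(1-x) + (1+x)*ln(1+x))/2) has_real_derivative (ln (1+x) - ln (1-x))/2) (at x)"
  proof -
    have "1 - x \<noteq> 0" "1 + x \<noteq> 0" using assms by auto
    then show ?thesis using assms by (auto intro!: derivative_eq_intros)
  qed
  have l2: "((\<lambda>x. ln (30+30*x^2+2*x^4)) has_real_derivative (60*x+8*x^3)/(30+30*x^2+2*x^4)) (at x)"
    using pos by (auto intro!: derivative_eq_intros simp: field_simps)
  have l3: "((\<lambda>x. ln (30+15*x^2)) has_real_derivative 2*x/(2+x^2)) (at x)"
    using pos by (auto intro!: derivative_eq_intros simp: field_simps)
  show ?thesis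
    unfolding Dphi_def[abs_def] D1_def
    by (intro DERIV_diff l1 l2 l3)
qed

lemma Dphi_nn: assumes "0 \<le> x" "x < 1" shows "Dphi x \<ge> 0"
proof -
  have "Dphi 0 \<le> Dphi x"
    by (rule mono_deriv[of 0 x Dphi D1]) (use assms dDphi D1_nn in auto)
  then show ?thesis by (simp add: Dphi_def)
qed



lemma lam2: assumes a: "0 < a" and b: "0 < b" shows "lam 2 a b = AM a b"
proof (cases "a = b")
  case True then show ?thesis by (simp add: lam_def AM_def)
next
  case False
  have ab: "(a+b)/2 > 0" using a b by simp
  have d: "a^2 + b^2 - 2*((a+b)/2)^2 = (a-b)^2/2" by (simp add: power2_eq_square field_simps)
  have n: "a^3 + b^3 - 2*((a+b)/2)^3 = 3*(a+b)*(a-b)^2/4" by (simp add: power2_eq_square power3_eq_cube field_simps)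
  have nz: "(a-b)^2 \<noteq> 0" using False by simp
  have "lam 2 a b = 1/3*((a^3+b^3-2*((a+b)/2)^3)/(a^2+b^2-2*((a+b)/2)^2))"
    using False a b ab unfolding lam_def by simp
  also have "\<dots> = 1/3*((3*(a+b)*(a-b)^2/4)/((a-b)^2/2))" unfolding d n ..
  also have "\<dots> = (a+b)/2" using nz by (simp add: field_simps)
  finally show ?thesis unfolding AM_def .
qed

lemma lam5_le_Gini: assumes a: "0 < a" and b: "0 < b" shows "lam 5 a b \<le> Gini a b"
proof (cases "a = b")
  case True then show ?thesis using a
    by (simp add: lam_def Gini_def powr_add[symmetric])
next
  case False
  define m where "m = (a+b)/2"
  define x where "x = (b-a)/(a+b)"
  have m: "m > 0" using a b by (simp add: m_def)
  have ha: "a = m*(1-x)" and hb: "b = m*(1+x)" using a b by (simp_all add: m_def x_def field_simps)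
  have x1: "-1 < x" "x < 1" "x \<noteq> 0" using a b False by (auto simp: x_def field_simps)
  have x2: "x^2 > 0" using x1 by simp
  have "x^4 \<ge> 0" by simp
  have lam5: "lam 5 a b = 2/3 * ((a^6 + b^6 - 2*m^6) / (a^5 + b^5 - 2*m^5))"
    using False a b m unfolding lam_def m_def by simp
  have num: "(m*(1-x))^6 + (m*(1+x))^6 - 2*m^6 = m^6*(30*x^2+30*x^4+2*x^6)" by algebra
  have den: "(m*(1-x))^5 + (m*(1+x))^5 - 2*m^5 = m^5*(20*x^2+10*x^4)" by algebra
  define R where "R = (30+30*x^2+2*x^4)/(30+15*x^2)"
  have "2/3 * ((m^6*(30*x^2+30*x^4+2*x^6)) / (m^5*(20*x^2+10*x^4))) = m * R"
  proof -
    have p: "20*x^2+10*x^4 > 0" "30+15*x^2 > 0" using x2 \<open>x^4 \<ge> 0\<close> by linarith+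
    have nz: "m^5*(20*x^2+10*x^4) \<noteq> 0" "30+15*x^2 \<noteq> 0" using m p by auto
    show ?thesis unfolding R_def using nz by (simp add: divide_simps; algebra)
  qed
  moreover have "a^6 + b^6 - 2*m^6 = m^6*(30*x^2+30*x^4+2*x^6)" using num unfolding ha hb .
  moreover have "a^5 + b^5 - 2*m^5 = m^5*(20*x^2+10*x^4)" using den unfolding ha hb .
  ultimately have lamR: "lam 5 a b = m * R" unfolding lam5 by simp
  have Rp: "30+30*x^2+2*x^4 > 0" "30+15*x^2 > 0" using x2 \<open>x^4 \<ge> 0\<close> by linarith+
  define phi where "phi = ((1-x)*ln(1-x) + (1+x)*ln(1+x))/2"
  have "Dphi x \<ge> 0"
  proof (cases "x \<ge> 0")
    case True then show ?thesis using Dphi_nn x1 by auto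
  next
    case False
    have "Dphi (-x) \<ge> 0" using Dphi_nn[of "-x"] x1 False by auto
    moreover have "Dphi (-x) = Dphi x" unfolding Dphi_def by (simp add: algebra_simps)
    ultimately show ?thesis by simp
  qed
  then have "ln R \<le> phi" using Rp unfolding Dphi_def phi_def R_def by (simp add: ln_div)
  then have RG: "R \<le> exp phi" using Rp unfolding R_def
    by (metis divide_pos_pos exp_le_cancel_iff exp_ln)
  have ea: "a/(a+b) = (1-x)/2" and eb: "b/(a+b) = (1+x)/2" using a b by (simp_all add: x_def field_simps)
  have la: "ln a = ln m + ln (1-x)" and lb: "ln b = ln m + ln (1+x)"
    using m x1 unfolding ha hb by (simp_all add: ln_mult)
  have "Gini a b = exp (a/(a+b) * ln a + b/(a+b) * ln b)"
    using a b unfolding Gini_def by (simp add: powr_def exp_add)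
  also have "a/(a+b) * ln a + b/(a+b) * ln b = ln m + phi"
    unfolding ea eb la lb phi_def by (simp add: field_simps)
  also have "exp (ln m + phi) = m * exp phi" using m by (simp add: exp_add)
  finally have "Gini a b = m * exp phi" .
  then show ?thesis using lamR RG m by simp
qed

lemma asym: assumes "s > (5::real)"
  shows "((\<lambda>x. ((s-1)*((1-x) powr (s+1) + (1+x) powr (s+1) - 2) - (s+1) * exp (((1-x)*ln(1-x) + (1+x)*ln(1+x))/2) * ((1-x) powr s + (1+x) powr s - 2))/x^4) \<longlongrightarrow> (s+1)* s *(s-1)*(s-5)/6) (at_right 0)"
  using assms by (real_asymp simp add: field_simps)

lemma lam_gt_Gini: assumes s: "s > 5" shows "\<exists>a b. 0 < a \<and> 0 < b \<and> Gini a b < lam s a b"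
proof -
  have L: "(s+1)* s *(s-1)*(s-5)/6 > 0" using s by simp
  have ev: "eventually (\<lambda>x. ((s-1)*((1-x) powr (s+1) + (1+x) powr (s+1) - 2) - (s+1) * exp (((1-x)*ln(1-x) + (1+x)*ln(1+x))/2) * ((1-x) powr s + (1+x) powr s - 2))/x^4 > 0) (at_right 0)"
    using order_tendstoD(1)[OF asym[OF s] L] .
  then obtain e where e: "e > 0" and he: "\<And>y. 0 < y \<Longrightarrow> y < e \<Longrightarrow> ((s-1)*((1-y) powr (s+1) + (1+y) powr (s+1) - 2) - (s+1) * exp (((1-y)*ln(1-y) + (1+y)*ln(1+y))/2) * ((1-y) powr s + (1+y) powr s - 2))/y^4 > 0"
    unfolding eventually_at_right_field by auto
  define x where "x = min (e/2) (1/2)"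
  have x: "0 < x" "x < e" "x < 1" using e by (auto simp: x_def)
  define G where "G = exp (((1-x)*ln(1-x) + (1+x)*ln(1+x))/2)"
  define fs where "fs = (1-x) powr s + (1+x) powr s - 2"
  define fs1 where "fs1 = (1-x) powr (s+1) + (1+x) powr (s+1) - 2"
  have "((s-1)*fs1 - (s+1)*G*fs)/x^4 > 0" using he[OF x(1,2)] unfolding G_def fs_def fs1_def .
  then have key: "(s-1)*fs1 > (s+1)*G*fs" using x by (simp add: zero_less_divide_iff)
  have "Dl s (1-x) (1+x) > 0" using x by (intro Dl_pos) auto
  moreover have "Dl s (1-x) (1+x) = fs / (s*(s-1))" using s unfolding Dl_def P_def fs_def
    by (simp add: add_divide_distrib diff_divide_distrib)
  moreover have "s*(s-1) > 0" using s by simp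
  ultimately have fs: "fs > 0" by (simp add: zero_less_divide_iff)
  have lamx: "lam s (1-x) (1+x) = (s-1)/(s+1) * (fs1/fs)" using s x unfolding lam_def fs_def fs1_def by simp
  have Gx: "Gini (1-x) (1+x) = G" using x unfolding Gini_def G_def
    by (simp add: powr_def exp_add[symmetric] field_simps)
  have B: "(s+1)*fs > 0" using fs s by simp
  have "G*((s+1)*fs) < (s-1)*fs1" using key by (simp add: algebra_simps)
  then have "G < ((s-1)*fs1)/((s+1)*fs)" by (simp add: pos_less_divide_eq[OF B])
  then have "G < (s-1)/(s+1) * (fs1/fs)" by simp
  then show ?thesis using x Gx lamx by (intro exI[of _ "1-x"] exI[of _ "1+x"]) auto
qed


lemma lam_mono_le: assumes "0 < a" "0 < b" "s \<le> r" shows "lam s a b \<le> lam r a b"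
proof (cases "a = b")
  case True then show ?thesis by (simp add: lam_def)
next
  case False
  show ?thesis
  proof (cases "s = r")
    case False
    then show ?thesis using lam_mono[of a b s r] assms \<open>a \<noteq> b\<close> by simp
  qed simp
qed

lemma AM_le: assumes "0 < a" "0 < b" "2 \<le> s" shows "AM a b \<le> lam s a b"
  using lam2[of a b] lam_mono_le[of a b 2 s] assms by simp

lemma Gini_ge: assumes "0 < a" "0 < b" "s \<le> 5" shows "lam s a b \<le> Gini a b"
  using lam5_le_Gini[of a b] lam_mono_le[of a b s 5] assms by simp

theorem theorem3:
  shows "(\<forall>s::real. 2 \<le> s \<and> s \<le> 5 \<longrightarrow>
           (\<forall>a b::real. a > 0 \<longrightarrow> b > 0 \<longrightarrow>
              AM a b \<le> lam s a b \<and> lam s a b \<le> Gini a b))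
       \<and> (\<forall>s::real. (\<forall>a b::real. a > 0 \<longrightarrow> b > 0 \<longrightarrow> AM a b \<le> lam s a b) \<longleftrightarrow> 2 \<le> s)
       \<and> (\<forall>s::real. (\<forall>a b::real. a > 0 \<longrightarrow> b > 0 \<longrightarrow> lam s a b \<le> Gini a b) \<longleftrightarrow> s \<le> 5)"
proof -
  have P1: "\<forall>s::real. 2 \<le> s \<and> s \<le> 5 \<longrightarrow>
           (\<forall>a b::real. a > 0 \<longrightarrow> b > 0 \<longrightarrow>
              AM a b \<le> lam s a b \<and> lam s a b \<le> Gini a b)"
    using AM_le Gini_ge by auto
  have P2: "(\<forall>a b::real. a > 0 \<longrightarrow> b > 0 \<longrightarrow> AM a b \<le> lam s a b) \<longleftrightarrow> 2 \<le> s" for s :: real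
  proof
    assume h: "\<forall>a b::real. a > 0 \<longrightarrow> b > 0 \<longrightarrow> AM a b \<le> lam s a b"
    show "2 \<le> s"
    proof (rule ccontr)
      assume "\<not> 2 \<le> s"
      then have "lam s 1 3 < lam 2 1 3" by (intro lam_mono) auto
      also have "\<dots> = AM 1 3" by (rule lam2) auto
      finally have "lam s 1 3 < AM 1 3" .
      moreover have "AM 1 3 \<le> lam s 1 3" using h by simp
      ultimately show False by linarith
    qed
  qed (use AM_le in auto)
  have P3: "(\<forall>a b::real. a > 0 \<longrightarrow> b > 0 \<longrightarrow> lam s a b \<le> Gini a b) \<longleftrightarrow> s \<le> 5" for s :: real
  proof
    assume h: "\<forall>a b::real. a > 0 \<longrightarrow> b > 0 \<longrightarrow> lam s a b \<le> Gini a b"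
    show "s \<le> 5"
    proof (rule ccontr)
      assume "\<not> s \<le> 5"
      then have "s > 5" by simp
      then obtain a b where ab: "0 < a" "0 < b" "Gini a b < lam s a b" using lam_gt_Gini by blast
      have "lam s a b \<le> Gini a b" using h ab(1,2) by blast
      then show False using ab(3) by linarith
    qed
  qed (use Gini_ge in auto)
  show ?thesis unfolding P2 P3 using P1 by simp
qed

end
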